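(* Fix $a\ge0$. For every $x\ge0$ and $\varepsilon>0$, almost surely: (i) $t\mapsto R^{(x+\varepsilon)}(t)-R^{(x)}(t)$ is non-increasing on $[0,\infty)$ and takes values in $[-\varepsilon,0]$; (ii) $t\mapsto U^{(x+\varepsilon)}(t)-U^{(x)}(t)$ is non-increasing on $[0,\infty)$ and takes values in $[0,\varepsilon]$; (iii) $t\mapsto L^{(x+\varepsilon)}(t)-L^{(x)}(t)$ is non-decreasing on $[0,\infty)$ and takes values in $[0,\varepsilon]$.
   Context: $X$ is a real-valued Lévy process with $X(0)=0$ under $\mathbb{P}$; $N_r$ is an independent Poisson process of rate $r>0$ with arrival times $0<T_1<T_2<\cdots$, $T_0:=0$. For $y\ge0$ let $X^{(y)}:=X+y$. Given $a\ge0$, $(U^{(y)},L^{(y)},R^{(y)})$ denotes the periodic-classical barrier strategy at $a$ driven by $X^{(y)}$, constructed recursively: $U^{(y)}=X^{(y)}-L^{(y)}+R^{(y)}$; $L^{(y)}(0)=0$ and $L^{(y)}$ is constant on each $[T_k,T_{k+1})$; on $[T_k,T_{k+1})$, with $Y(t):=U^{(y)}(T_k)+X(t)-X(T_k)$ (where $U^{(y)}(T_0):=y$), $R^{(y)}(t)=R^{(y)}(T_k)+\max\{0,\sup_{s\in[T_k,t]}(-Y(s))\}$ (with $R^{(y)}(T_0):=0$) and $U^{(y)}(t)=Y(t)+R^{(y)}(t)-R^{(y)}(T_k)$; at $T_{k+1}$, $L^{(y)}$ jumps by $(U^{(y)}(T_{k+1}-)-a)^+$ and $U^{(y)}(T_{k+1})=\min\{U^{(y)}(T_{k+1}-),a\}$.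 Thus $R^{(y)}$ is the cumulative capital injection (classical reflection at $0$) and $L^{(y)}$ the cumulative periodic dividend (reflection at $a$ at Poisson times). *)

theory Defs
  imports "HOL-Probability.Probability"
begin

definition levy_process :: "'w measure \<Rightarrow> ('w \<Rightarrow> real \<Rightarrow> real) \<Rightarrow> bool" where
  "levy_process M X \<longleftrightarrow>
     prob_space M \<and>
     (\<forall>t. (\<lambda>\<omega>. X \<omega> t) \<in> borel_measurable M) \<and>
     (AE \<omega> in M. X \<omega> 0 = 0) \<and>
     (\<forall>(n::nat) (\<tau>::nat \<Rightarrow> real). 0 \<le> \<tau> 0 \<and> (\<forall>i<n. \<tau> i \<le> \<tau> (Suc i)) \<longrightarrow>
        prob_space.indep_vars M (\<lambda>_. borel) (\<lambda>i \<omega>. X \<omega> (\<tau> (Suc i)) - X \<omega> (\<tau> i)) {..<n}) \<and>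
     (\<forall>s t. 0 \<le> s \<longrightarrow> 0 \<le> t \<longrightarrow>
        distr M borel (\<lambda>\<omega>. X \<omega> (t + s) - X \<omega> t) = distr M borel (\<lambda>\<omega>. X \<omega> s)) \<and>
     (AE \<omega> in M. \<forall>t\<ge>0. continuous (at_right t) (X \<omega>) \<and>
                        (0 < t \<longrightarrow> (\<exists>l. (X \<omega> \<longlongrightarrow> l) (at_left t))))"

definition poisson_arrivals :: "'w measure \<Rightarrow> real \<Rightarrow> ('w \<Rightarrow> nat \<Rightarrow> real) \<Rightarrow> bool" where
  "poisson_arrivals M r T \<longleftrightarrow>
     (\<forall>\<omega>\<in>space M. T \<omega> 0 = 0) \<and>
     prob_space.indep_vars M (\<lambda>_. borel) (\<lambda>k \<omega>. T \<omega> (Suc k) - T \<omega> k) UNIV \<and>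
     (\<forall>k. distributed M lborel (\<lambda>\<omega>. T \<omega> (Suc k) - T \<omega> k) (exponential_density r))"

text \<open>Increment of the capital injection since the last arrival time s0, given
  the state u = U(s0): max{0, sup_{s in [s0,t]} -(u + x s - x s0)}.\<close>
definition seg_R :: "(real \<Rightarrow> real) \<Rightarrow> real \<Rightarrow> real \<Rightarrow> real \<Rightarrow> real" where
  "seg_R x s0 u t = max 0 (SUP s\<in>{s0..t}. - (u + x s - x s0))"

definition seg_U :: "(real \<Rightarrow> real) \<Rightarrow> real \<Rightarrow> real \<Rightarrow> real \<Rightarrow> real" where
  "seg_U x s0 u t = u + x t - x s0 + seg_R x s0 u t"

text \<open>State (U(T_k), R(T_k), L(T_k)) at the k-th arrival time, for the path x,
  arrival times T, barrier a and initial capital y.\<close>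
fun pc_state :: "(real \<Rightarrow> real) \<Rightarrow> (nat \<Rightarrow> real) \<Rightarrow> real \<Rightarrow> real \<Rightarrow> nat \<Rightarrow> real \<times> real \<times> real" where
  "pc_state x T a y 0 = (y, 0, 0)"
| "pc_state x T a y (Suc k) =
     (case pc_state x T a y k of (u, rr, l) \<Rightarrow>
        (let um = Lim (at_left (T (Suc k))) (seg_U x (T k) u);
             rm = Lim (at_left (T (Suc k))) (seg_R x (T k) u)
         in (min um a, rr + rm, l + max 0 (um - a))))"

definition pc_index :: "(nat \<Rightarrow> real) \<Rightarrow> real \<Rightarrow> nat" where
  "pc_index T t = (LEAST k. t < T (Suc k))"

definition pc_U :: "(real \<Rightarrow> real) \<Rightarrow> (nat \<Rightarrow> real) \<Rightarrow> real \<Rightarrow> real \<Rightarrow> real \<Rightarrow> real" where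
  "pc_U x T a y t = (let k = pc_index T t in
     case pc_state x T a y k of (u, rr, l) \<Rightarrow> seg_U x (T k) u t)"

definition pc_R :: "(real \<Rightarrow> real) \<Rightarrow> (nat \<Rightarrow> real) \<Rightarrow> real \<Rightarrow> real \<Rightarrow> real \<Rightarrow> real" where
  "pc_R x T a y t = (let k = pc_index T t in
     case pc_state x T a y k of (u, rr, l) \<Rightarrow> rr + seg_R x (T k) u t)"

definition pc_L :: "(real \<Rightarrow> real) \<Rightarrow> (nat \<Rightarrow> real) \<Rightarrow> real \<Rightarrow> real \<Rightarrow> real \<Rightarrow> real" where
  "pc_L x T a y t = (let k = pc_index T t in
     case pc_state x T a y k of (u, rr, l) \<Rightarrow> l)"

end

theory Submission
  imports Defs
begin


lemma cadlag_bdd: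
  fixes p :: "real \<Rightarrow> real"
  assumes cad: "\<forall>t\<ge>0. continuous (at_right t) p \<and> (0 < t \<longrightarrow> (\<exists>l. (p \<longlongrightarrow> l) (at_left t)))"
    and s0: "0 \<le> s0"
  shows "\<exists>B. \<forall>s\<in>{s0..s1}. \<bar>p s\<bar> \<le> B"
proof -
  have loc: "\<exists>d>0. \<exists>B. \<forall>s\<in>{s0..s1}. \<bar>s - t\<bar> < d \<longrightarrow> \<bar>p s\<bar> \<le> B" if t: "t \<in> {s0..s1}" for t
  proof -
    from t s0 have t0: "t \<ge> 0" by auto
    with cad have "continuous (at_right t) p" by auto
    then have "(p \<longlongrightarrow> p t) (at_right t)" by (simp add: continuous_within)
    then have "eventually (\<lambda>s. dist (p s) (p t) < 1) (at_right t)" by (rule tendstoD) simp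
    then obtain b1 where b1: "b1 > t" "\<forall>s>t. s < b1 \<longrightarrow> dist (p s) (p t) < 1"
      by (auto simp: eventually_at_right_field)
    show ?thesis
    proof (cases "t = s0")
      case True
      have "\<bar>p s\<bar> \<le> \<bar>p t\<bar> + 1" if s: "s \<in> {s0..s1}" "\<bar>s - t\<bar> < b1 - t" for s
        proof (cases "s = t")
          case False
          then have "s > t" using s True by auto
          then have "dist (p s) (p t) < 1" using b1 s by auto
          then show ?thesis by (auto simp: dist_real_def)
        qed simp
      then show ?thesis using b1 by (intro exI[of _ "b1 - t"] conjI exI[of _ "\<bar>p t\<bar> + 1"]) auto
    next
      case False
      then have "t > 0" using t s0 by auto
      with cad obtain l where "(p \<longlongrightarrow> l) (at_left t)" by (meson less_imp_le)
      then have "eventually (\<lambda>s. dist (p s) l < 1) (at_left t)" by (rule tendstoD) simp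
      then obtain b2 where b2: "b2 < t" "\<forall>s<t. s > b2 \<longrightarrow> dist (p s) l < 1"
        by (auto simp: eventually_at_left_field)
      have "\<bar>p s\<bar> \<le> max \<bar>p t\<bar> \<bar>l\<bar> + 1" if s: "s \<in> {s0..s1}" "\<bar>s - t\<bar> < min (b1 - t) (t - b2)" for s
      proof -
        consider "s = t" | "s > t" | "s < t" by linarith
        then show ?thesis
        proof cases
          case 2
          then have "dist (p s) (p t) < 1" using b1 s by auto
          then show ?thesis by (auto simp: dist_real_def)
        next
          case 3
          then have "dist (p s) l < 1" using b2 s by auto
          then show ?thesis by (auto simp: dist_real_def)
        qed simp
      qed
      then show ?thesis using b1 b2 by (intro exI[of _ "min (b1 - t) (t - b2)"] conjI exI[of _ "max \<bar>p t\<bar> \<bar>l\<bar> + 1"]) auto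
    qed
  qed
  then obtain d B where dB: "\<forall>t\<in>{s0..s1}. d t > 0 \<and> (\<forall>s\<in>{s0..s1}. \<bar>s - t\<bar> < d t \<longrightarrow> \<bar>p s\<bar> \<le> B t)"
    by metis
  have cov: "{s0..s1} \<subseteq> \<Union> ((\<lambda>t. ball t (d t)) ` {s0..s1})"
    using dB by force
  obtain C where C: "C \<subseteq> {s0..s1}" "finite C" "{s0..s1} \<subseteq> \<Union> ((\<lambda>t. ball t (d t)) ` C)"
    by (rule compactE_image[OF compact_Icc _ cov]) auto
  show ?thesis
  proof (intro exI[of _ "Max (insert 0 (B ` C))"] ballI)
    fix s assume s: "s \<in> {s0..s1}"
    then obtain c where c: "c \<in> C" "s \<in> ball c (d c)" using C by blast
    then have "\<bar>s - c\<bar> < d c" by (auto simp: dist_real_def)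
    then have "\<bar>p s\<bar> \<le> B c" using dB C c s by auto
    also have "B c \<le> Max (insert 0 (B ` C))" using C c by (intro Max_ge) auto
    finally show "\<bar>p s\<bar> \<le> Max (insert 0 (B ` C))" .
  qed
qed



definition mm :: "(real \<Rightarrow> real) \<Rightarrow> real \<Rightarrow> real \<Rightarrow> real \<Rightarrow> real" where
  "mm p s0 u t = (SUP s\<in>{s0..t}. - (u + p s - p s0))"

lemma segR_mm: "seg_R p s0 u t = max 0 (mm p s0 u t)"
  by (simp add: seg_R_def mm_def)

lemma mm_bdd:
  fixes p :: "real \<Rightarrow> real"
  assumes bnd: "\<forall>s\<in>{s0..s1}. \<bar>p s\<bar> \<le> B" and "t \<le> s1"
  shows "bdd_above ((\<lambda>s. - (u + p s - p s0)) ` {s0..t})"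
proof (rule bdd_aboveI2)
  fix s assume "s \<in> {s0..t}"
  then have "\<bar>p s\<bar> \<le> B" using bnd assms(2) by (meson atLeastAtMost_iff order_trans)
  then show "- (u + p s - p s0) \<le> - u + B + p s0" by linarith
qed

lemma mm_le:
  fixes p :: "real \<Rightarrow> real"
  assumes bnd: "\<forall>s\<in>{s0..s1}. \<bar>p s\<bar> \<le> B" and "s0 \<le> t" "t \<le> s1"
  shows "mm p s0 u t \<le> - u + B + p s0"
  unfolding mm_def
proof (rule cSUP_least)
  show "{s0..t} \<noteq> {}" using assms by auto
  fix s assume "s \<in> {s0..t}"
  then have "\<bar>p s\<bar> \<le> B" using bnd assms by auto
  then show "- (u + p s - p s0) \<le> - u + B + p s0" by linarith
qed

lemma mm_shift:
  fixes p :: "real \<Rightarrow> real"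
  assumes bnd: "\<forall>s\<in>{s0..s1}. \<bar>p s\<bar> \<le> B" and "s0 \<le> t" "t \<le> s1"
  shows "mm p s0 u' t = (u - u') + mm p s0 u t"
proof -
  have "mm p s0 u' t = (SUP s\<in>{s0..t}. (u - u') + - (u + p s - p s0))"
    unfolding mm_def by (rule SUP_cong) auto
  also have "\<dots> = (u - u') + mm p s0 u t"
    unfolding mm_def using assms by (intro Sup_add_eq mm_bdd[OF bnd]) auto
  finally show ?thesis .
qed

lemma mm_mono:
  fixes p :: "real \<Rightarrow> real"
  assumes bnd: "\<forall>s\<in>{s0..s1}. \<bar>p s\<bar> \<le> B" and "s0 \<le> t" "t \<le> t'" "t' \<le> s1"
  shows "mm p s0 u t \<le> mm p s0 u t'"
  unfolding mm_def
  using assms by (intro cSUP_subset_mono mm_bdd[OF bnd]) auto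

lemma seg_basic:
  fixes p :: "real \<Rightarrow> real"
  assumes bnd: "\<forall>s\<in>{s0..s1}. \<bar>p s\<bar> \<le> B" and uu: "u \<le> u'" and "s0 \<le> t" "t \<le> t'" "t' \<le> s1"
  shows "u - u' \<le> seg_R p s0 u' t - seg_R p s0 u t"
    and "seg_R p s0 u' t - seg_R p s0 u t \<le> 0"
    and "seg_R p s0 u' t' - seg_R p s0 u t' \<le> seg_R p s0 u' t - seg_R p s0 u t"
proof -
  have 1: "mm p s0 u' t = (u - u') + mm p s0 u t" using assms by (intro mm_shift[OF bnd]) auto
  have 2: "mm p s0 u' t' = (u - u') + mm p s0 u t'" using assms by (intro mm_shift[OF bnd]) auto
  have 3: "mm p s0 u t \<le> mm p s0 u t'" using assms by (intro mm_mono[OF bnd]) auto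
  show "u - u' \<le> seg_R p s0 u' t - seg_R p s0 u t"
    "seg_R p s0 u' t - seg_R p s0 u t \<le> 0"
    "seg_R p s0 u' t' - seg_R p s0 u t' \<le> seg_R p s0 u' t - seg_R p s0 u t"
    unfolding segR_mm 1 2 using uu 3 by (simp_all add: max_def)
qed

lemma seg_basic12:
  fixes p :: "real \<Rightarrow> real"
  assumes bnd: "\<forall>s\<in>{s0..s1}. \<bar>p s\<bar> \<le> B" and uu: "u \<le> u'" and "s0 \<le> t" "t \<le> s1"
  shows "u - u' \<le> seg_R p s0 u' t - seg_R p s0 u t"
    and "seg_R p s0 u' t - seg_R p s0 u t \<le> 0"
  using seg_basic[OF bnd uu, of t t] assms by auto

lemma seg_R_lim_ex:
  fixes p :: "real \<Rightarrow> real"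
  assumes bnd: "\<forall>s\<in>{s0..s1}. \<bar>p s\<bar> \<le> B" and "s0 < s1"
  shows "\<exists>l. (seg_R p s0 u \<longlongrightarrow> l) (at_left s1)"
proof -
  define f where "f t = mm p s0 u (max s0 t)" for t
  have "(f \<longlongrightarrow> Sup (f ` ({..<s1} \<inter> UNIV))) (at s1 within ({..<s1} \<inter> UNIV))"
  proof (rule Lim_left_bound)
    fix a b assume "b < s1" "a \<le> b"
    then show "f a \<le> f b" unfolding f_def using assms by (intro mm_mono[OF bnd]) auto
  next
    fix b assume "b < s1"
    then show "f b \<le> - u + B + p s0" unfolding f_def using assms by (intro mm_le[OF bnd]) auto
  qed
  then have "(f \<longlongrightarrow> Sup (f ` {..<s1})) (at_left s1)" by simp
  then have "((\<lambda>t. max 0 (f t)) \<longlongrightarrow> max 0 (Sup (f ` {..<s1}))) (at_left s1)"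
    by (intro tendsto_max tendsto_const)
  moreover have "eventually (\<lambda>t. max 0 (f t) = seg_R p s0 u t) (at_left s1)"
    using eventually_at_left_real[OF assms(2)]
    by eventually_elim (auto simp: f_def segR_mm)
  ultimately show ?thesis by (auto intro: tendsto_cong[THEN iffD1])
qed

lemma seg_U_lim:
  fixes p :: "real \<Rightarrow> real"
  assumes "(p \<longlongrightarrow> pl) (at_left s1)" "(seg_R p s0 u \<longlongrightarrow> l) (at_left s1)"
  shows "(seg_U p s0 u \<longlongrightarrow> u + pl - p s0 + l) (at_left s1)"
  unfolding seg_U_def[abs_def] using assms by (intro tendsto_intros)

lemma seg_lims:
  fixes p :: "real \<Rightarrow> real"
  assumes bnd: "\<forall>s\<in>{s0..s1}. \<bar>p s\<bar> \<le> B" and s01: "s0 < s1" and pl: "(p \<longlongrightarrow> pl) (at_left s1)"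
    and uu: "u \<le> u'"
  shows "u - u' \<le> Lim (at_left s1) (seg_R p s0 u') - Lim (at_left s1) (seg_R p s0 u)"
    and "Lim (at_left s1) (seg_R p s0 u') - Lim (at_left s1) (seg_R p s0 u) \<le> 0"
    and "\<forall>t. s0 \<le> t \<and> t < s1 \<longrightarrow> Lim (at_left s1) (seg_R p s0 u') - Lim (at_left s1) (seg_R p s0 u)
             \<le> seg_R p s0 u' t - seg_R p s0 u t"
    and "Lim (at_left s1) (seg_U p s0 u) = u + pl - p s0 + Lim (at_left s1) (seg_R p s0 u)"
    and "Lim (at_left s1) (seg_U p s0 u') = u' + pl - p s0 + Lim (at_left s1) (seg_R p s0 u')"
proof -
  obtain l where l: "(seg_R p s0 u \<longlongrightarrow> l) (at_left s1)" using seg_R_lim_ex[OF bnd s01] by blast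
  obtain l' where l': "(seg_R p s0 u' \<longlongrightarrow> l') (at_left s1)" using seg_R_lim_ex[OF bnd s01] by blast
  have L: "Lim (at_left s1) (seg_R p s0 u) = l" by (rule tendsto_Lim[OF trivial_limit_at_left_real l])
  have L': "Lim (at_left s1) (seg_R p s0 u') = l'" by (rule tendsto_Lim[OF trivial_limit_at_left_real l'])
  show "Lim (at_left s1) (seg_U p s0 u) = u + pl - p s0 + Lim (at_left s1) (seg_R p s0 u)"
    unfolding L by (rule tendsto_Lim[OF trivial_limit_at_left_real seg_U_lim[OF pl l]])
  show "Lim (at_left s1) (seg_U p s0 u') = u' + pl - p s0 + Lim (at_left s1) (seg_R p s0 u')"
    unfolding L' by (rule tendsto_Lim[OF trivial_limit_at_left_real seg_U_lim[OF pl l']])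
  have D: "((\<lambda>t. seg_R p s0 u' t - seg_R p s0 u t) \<longlongrightarrow> l' - l) (at_left s1)"
    using l l' by (intro tendsto_intros)
  have ev: "eventually (\<lambda>t. s0 < t \<and> t < s1) (at_left s1)"
    using eventually_at_left_real[OF s01] by eventually_elim auto
  show "u - u' \<le> Lim (at_left s1) (seg_R p s0 u') - Lim (at_left s1) (seg_R p s0 u)"
    unfolding L L'
  proof (rule tendsto_le[OF trivial_limit_at_left_real D tendsto_const])
    show "\<forall>\<^sub>F t in at_left s1. u - u' \<le> seg_R p s0 u' t - seg_R p s0 u t"
      using ev by eventually_elim (rule seg_basic12(1)[OF bnd uu], auto)
  qed
  show "Lim (at_left s1) (seg_R p s0 u') - Lim (at_left s1) (seg_R p s0 u) \<le> 0"
    unfolding L L'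
  proof (rule tendsto_le[OF trivial_limit_at_left_real tendsto_const D])
    show "\<forall>\<^sub>F t in at_left s1. seg_R p s0 u' t - seg_R p s0 u t \<le> 0"
      using ev by eventually_elim (rule seg_basic12(2)[OF bnd uu], auto)
  qed
  show "\<forall>t. s0 \<le> t \<and> t < s1 \<longrightarrow> Lim (at_left s1) (seg_R p s0 u') - Lim (at_left s1) (seg_R p s0 u)
             \<le> seg_R p s0 u' t - seg_R p s0 u t"
  proof (intro allI impI)
    fix t assume t: "s0 \<le> t \<and> t < s1"
    show "Lim (at_left s1) (seg_R p s0 u') - Lim (at_left s1) (seg_R p s0 u)
             \<le> seg_R p s0 u' t - seg_R p s0 u t"
      unfolding L L'
    proof (rule tendsto_le[OF trivial_limit_at_left_real tendsto_const D])
      have "eventually (\<lambda>\<tau>. t < \<tau> \<and> \<tau> < s1) (at_left s1)"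
        using eventually_at_left_real[of t s1] t by (auto elim: eventually_mono)
      then show "\<forall>\<^sub>F \<tau> in at_left s1. seg_R p s0 u' \<tau> - seg_R p s0 u \<tau> \<le> seg_R p s0 u' t - seg_R p s0 u t"
        by eventually_elim (rule seg_basic(3)[OF bnd uu], use t in auto)
    qed
  qed
qed



lemma pc_index_ex:
  fixes T :: "nat \<Rightarrow> real"
  assumes Tinc: "\<forall>k. T k < T (Suc k)" and unb: "\<forall>N. \<exists>k. N \<le> T k"
  shows "\<exists>k. t < T (Suc k)"
proof -
  obtain k where "t + 1 \<le> T k" using unb by blast
  then have "t < T (Suc k)" using Tinc[rule_format, of k] by linarith
  then show ?thesis by blast
qed

lemma pc_index_props:
  fixes T :: "nat \<Rightarrow> real"
  assumes T0: "T 0 = 0" and Tinc: "\<forall>k. T k < T (Suc k)" and unb: "\<forall>N. \<exists>k. N \<le> T k" and t: "0 \<le> t"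
  shows "T (pc_index T t) \<le> t \<and> t < T (Suc (pc_index T t))"
proof
  show "t < T (Suc (pc_index T t))"
    unfolding pc_index_def using pc_index_ex[OF Tinc unb] by (rule LeastI_ex)
  show "T (pc_index T t) \<le> t"
  proof (cases "pc_index T t")
    case 0
    then show ?thesis using T0 t by simp
  next
    case (Suc j)
    have "\<not> t < T (Suc j)"
    proof
      assume "t < T (Suc j)"
      then have "pc_index T t \<le> j" unfolding pc_index_def by (rule Least_le)
      then show False using Suc by simp
    qed
    then show ?thesis using Suc by simp
  qed
qed

lemma pc_index_mono:
  fixes T :: "nat \<Rightarrow> real"
  assumes Tinc: "\<forall>k. T k < T (Suc k)" and unb: "\<forall>N. \<exists>k. N \<le> T k" and st: "s \<le> t"
  shows "pc_index T s \<le> pc_index T t"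
proof -
  have "t < T (Suc (pc_index T t))"
    unfolding pc_index_def using pc_index_ex[OF Tinc unb] by (rule LeastI_ex)
  then have "s < T (Suc (pc_index T t))" using st by linarith
  then show ?thesis unfolding pc_index_def[of T s] by (rule Least_le)
qed

lemma jump_arith:
  fixes um um' a :: real
  assumes "um \<le> um'"
  shows "0 \<le> min um' a - min um a" "min um' a - min um a \<le> um' - um"
    "0 \<le> max 0 (um' - a) - max 0 (um - a)"
    "(min um' a - min um a) + (max 0 (um' - a) - max 0 (um - a)) = um' - um"
  using assms by (auto simp: min_def max_def)



lemma det_main:
  fixes p :: "real \<Rightarrow> real" and T :: "nat \<Rightarrow> real" and a y \<epsilon> :: real
  assumes cad: "\<forall>t\<ge>0. continuous (at_right t) p \<and> (0 < t \<longrightarrow> (\<exists>l. (p \<longlongrightarrow> l) (at_left t)))"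
    and T0: "T 0 = 0" and Tinc: "\<forall>k. T k < T (Suc k)" and unb: "\<forall>N. \<exists>k. N \<le> T k"
    and eps: "0 < \<epsilon>"
  shows "(\<forall>s t. 0 \<le> s \<longrightarrow> s \<le> t \<longrightarrow>
        pc_R p T a (y + \<epsilon>) t - pc_R p T a y t
          \<le> pc_R p T a (y + \<epsilon>) s - pc_R p T a y s) \<and>
     (\<forall>t\<ge>0. - \<epsilon> \<le> pc_R p T a (y + \<epsilon>) t - pc_R p T a y t \<and>
             pc_R p T a (y + \<epsilon>) t - pc_R p T a y t \<le> 0) \<and>
     (\<forall>s t. 0 \<le> s \<longrightarrow> s \<le> t \<longrightarrow>
        pc_U p T a (y + \<epsilon>) t - pc_U p T a y t
          \<le> pc_U p T a (y + \<epsilon>) s - pc_U p T a y s) \<and>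
     (\<forall>t\<ge>0. 0 \<le> pc_U p T a (y + \<epsilon>) t - pc_U p T a y t \<and>
             pc_U p T a (y + \<epsilon>) t - pc_U p T a y t \<le> \<epsilon>) \<and>
     (\<forall>s t. 0 \<le> s \<longrightarrow> s \<le> t \<longrightarrow>
        pc_L p T a (y + \<epsilon>) s - pc_L p T a y s
          \<le> pc_L p T a (y + \<epsilon>) t - pc_L p T a y t) \<and>
     (\<forall>t\<ge>0. 0 \<le> pc_L p T a (y + \<epsilon>) t - pc_L p T a y t \<and>
             pc_L p T a (y + \<epsilon>) t - pc_L p T a y t \<le> \<epsilon>)"
proof -
  define y' where "y' = y + \<epsilon>"
  define U where "U z k = fst (pc_state p T a z k)" for z k
  define RR where "RR z k = fst (snd (pc_state p T a z k))" for z k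
  define LL where "LL z k = snd (snd (pc_state p T a z k))" for z k
  define um where "um z k = Lim (at_left (T (Suc k))) (seg_U p (T k) (U z k))" for z k
  define rm where "rm z k = Lim (at_left (T (Suc k))) (seg_R p (T k) (U z k))" for z k
  have stepU: "U z (Suc k) = min (um z k) a" for z k
    by (simp add: U_def um_def case_prod_beta Let_def)
  have stepR: "RR z (Suc k) = RR z k + rm z k" for z k
    by (simp add: U_def RR_def rm_def case_prod_beta Let_def)
  have stepL: "LL z (Suc k) = LL z k + max 0 (um z k - a)" for z k
    by (simp add: U_def LL_def um_def case_prod_beta Let_def)
  have base: "U z 0 = z" "RR z 0 = 0" "LL z 0 = 0" for z
    by (simp_all add: U_def RR_def LL_def)
  have sm: "strict_mono T" using Tinc by (simp add: strict_mono_Suc_iff)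
  have Tmono: "T j \<le> T k" if "j \<le> k" for j k using sm that by (simp add: strict_mono_less_eq)
  have Tnn: "0 \<le> T k" for k using Tmono[of 0 k] T0 by simp
  have "\<exists>B. \<forall>s\<in>{T k..T (Suc k)}. \<bar>p s\<bar> \<le> B" for k
    by (rule cadlag_bdd[OF cad Tnn])
  then obtain Bk where Bk: "\<forall>s\<in>{T k..T (Suc k)}. \<bar>p s\<bar> \<le> Bk k" for k by metis
  have "\<exists>l. (p \<longlongrightarrow> l) (at_left (T (Suc k)))" for k
    using cad Tnn[of k] Tinc[rule_format, of k] by auto
  then obtain pl where pl: "(p \<longlongrightarrow> pl k) (at_left (T (Suc k)))" for k by metis
  have SL: "U y k - U y' k \<le> rm y' k - rm y k \<and> rm y' k - rm y k \<le> 0 \<and>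
      (\<forall>t. T k \<le> t \<and> t < T (Suc k) \<longrightarrow> rm y' k - rm y k
             \<le> seg_R p (T k) (U y' k) t - seg_R p (T k) (U y k) t) \<and>
      um y k = U y k + pl k - p (T k) + rm y k \<and> um y' k = U y' k + pl k - p (T k) + rm y' k"
    if "U y k \<le> U y' k" for k
    using seg_lims[OF Bk Tinc[rule_format, of k] pl that] unfolding rm_def um_def by blast
  define dU where "dU k = U y' k - U y k" for k
  define dR where "dR k = RR y' k - RR y k" for k
  define dL where "dL k = LL y' k - LL y k" for k
  define drm where "drm k = rm y' k - rm y k" for k
  have inv: "0 \<le> dU k \<and> dU k \<le> \<epsilon> \<and> 0 \<le> dL k \<and> dR k \<le> 0 \<and> dU k + dL k - dR k = \<epsilon>" for k
  proof (induction k)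
    case 0
    then show ?case using eps by (simp add: dU_def dL_def dR_def base y'_def)
  next
    case (Suc k)
    then have le: "U y k \<le> U y' k" by (simp add: dU_def)
    note S = SL[OF le]
    have umle: "um y k \<le> um y' k" using S le by linarith
    note J = jump_arith[OF umle, of a]
    show ?case
      using Suc S J unfolding dU_def dL_def dR_def stepU stepR stepL by linarith
  qed
  have le: "U y k \<le> U y' k" for k using inv[of k] by (simp add: dU_def)
  have stepfacts: "dU (Suc k) \<le> dU k + drm k \<and> dU k + drm k \<le> dU k \<and> dR (Suc k) = dR k + drm k \<and>
      dL k \<le> dL (Suc k) \<and> - dU k \<le> drm k" for k
  proof -
    note S = SL[OF le[of k]]
    have umle: "um y k \<le> um y' k" using S le[of k] by linarith
    note J = jump_arith[OF umle, of a]
    show ?thesis using S J unfolding dU_def dL_def dR_def drm_def stepU stepR stepL by linarith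
  qed
  have decU: "dU k \<le> dU j" if "j \<le> k" for j k
  proof -
    have "decseq dU" by (rule decseq_SucI) (metis stepfacts order_trans add.commute le_add_same_cancel1 order_refl)
    then show ?thesis using that by (rule decseqD)
  qed
  have decR: "dR k \<le> dR j" if "j \<le> k" for j k
  proof -
    have "decseq dR" by (rule decseq_SucI) (metis stepfacts add_le_same_cancel1)
    then show ?thesis using that by (rule decseqD)
  qed
  have incL: "dL j \<le> dL k" if "j \<le> k" for j k
  proof -
    have "incseq dL" by (rule incseq_SucI) (metis stepfacts)
    then show ?thesis using that by (rule incseqD)
  qed
  define idx where "idx t = pc_index T t" for t
  define \<Delta> where "\<Delta> k t = seg_R p (T k) (U y' k) t - seg_R p (T k) (U y k) t" for k t
  have idx: "T (idx t) \<le> t \<and> t < T (Suc (idx t))" if "0 \<le> t" for t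
    unfolding idx_def by (rule pc_index_props[OF T0 Tinc unb that])
  have idxmono: "idx s \<le> idx t" if "s \<le> t" for s t
    unfolding idx_def by (rule pc_index_mono[OF Tinc unb that])
  have DU: "pc_U p T a y' t - pc_U p T a y t = dU (idx t) + \<Delta> (idx t) t" for t
    by (simp add: pc_U_def idx_def U_def dU_def \<Delta>_def Let_def case_prod_beta seg_U_def)
  have DR: "pc_R p T a y' t - pc_R p T a y t = dR (idx t) + \<Delta> (idx t) t" for t
    by (simp add: pc_R_def idx_def U_def RR_def dR_def \<Delta>_def Let_def case_prod_beta)
  have DL: "pc_L p T a y' t - pc_L p T a y t = dL (idx t)" for t
    by (simp add: pc_L_def idx_def LL_def dL_def Let_def case_prod_beta)
  have segb: "- dU k \<le> \<Delta> k t \<and> \<Delta> k t \<le> 0 \<and> drm k \<le> \<Delta> k t" if "T k \<le> t" "t < T (Suc k)" for k t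
  proof -
    have "U y k - U y' k \<le> \<Delta> k t" "\<Delta> k t \<le> 0"
      unfolding \<Delta>_def using seg_basic12[OF Bk le[of k]] that by auto
    moreover have "drm k \<le> \<Delta> k t" using SL[OF le[of k]] that unfolding drm_def \<Delta>_def by blast
    ultimately show ?thesis by (simp add: dU_def)
  qed
  have segm: "\<Delta> k t \<le> \<Delta> k s" if "T k \<le> s" "s \<le> t" "t < T (Suc k)" for k s t
    unfolding \<Delta>_def using seg_basic(3)[OF Bk le[of k], where t=s and t'=t] that by auto
  have R1: "\<forall>s t. 0 \<le> s \<longrightarrow> s \<le> t \<longrightarrow>
        pc_R p T a y' t - pc_R p T a y t \<le> pc_R p T a y' s - pc_R p T a y s"
    and U1: "\<forall>s t. 0 \<le> s \<longrightarrow> s \<le> t \<longrightarrow>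
        pc_U p T a y' t - pc_U p T a y t \<le> pc_U p T a y' s - pc_U p T a y s"
    and L1: "\<forall>s t. 0 \<le> s \<longrightarrow> s \<le> t \<longrightarrow>
        pc_L p T a y' s - pc_L p T a y s \<le> pc_L p T a y' t - pc_L p T a y t"
  proof (safe)
    fix s t :: real assume s: "0 \<le> s" and st: "s \<le> t"
    have t: "0 \<le> t" using s st by linarith
    have ks: "T (idx s) \<le> s" "s < T (Suc (idx s))" using idx[OF s] by auto
    have kt: "T (idx t) \<le> t" "t < T (Suc (idx t))" using idx[OF t] by auto
    have kk: "idx s \<le> idx t" using idxmono[OF st] .
    note bs = segb[OF ks] and bt = segb[OF kt]
    note sf = stepfacts[of "idx s"]
    show "pc_L p T a y' s - pc_L p T a y s \<le> pc_L p T a y' t - pc_L p T a y t"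
      unfolding DL using incL[OF kk] .
    show "pc_R p T a y' t - pc_R p T a y t \<le> pc_R p T a y' s - pc_R p T a y s"
    proof (cases "idx s = idx t")
      case True
      then show ?thesis unfolding DR using segm[of "idx s" s t] ks kt st by simp
    next
      case False
      then have "Suc (idx s) \<le> idx t" using kk by simp
      then have "dR (idx t) \<le> dR (Suc (idx s))" by (rule decR)
      then show ?thesis unfolding DR using bs bt sf by linarith
    qed
    show "pc_U p T a y' t - pc_U p T a y t \<le> pc_U p T a y' s - pc_U p T a y s"
    proof (cases "idx s = idx t")
      case True
      then show ?thesis unfolding DU using segm[of "idx s" s t] ks kt st by simp
    next
      case False
      then have "Suc (idx s) \<le> idx t" using kk by simp
      then have "dU (idx t) \<le> dU (Suc (idx s))" by (rule decU)
      then show ?thesis unfolding DU using bs bt sf by linarith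
    qed
  qed
  have B: "(- \<epsilon> \<le> pc_R p T a y' t - pc_R p T a y t \<and> pc_R p T a y' t - pc_R p T a y t \<le> 0) \<and>
      (0 \<le> pc_U p T a y' t - pc_U p T a y t \<and> pc_U p T a y' t - pc_U p T a y t \<le> \<epsilon>) \<and>
      (0 \<le> pc_L p T a y' t - pc_L p T a y t \<and> pc_L p T a y' t - pc_L p T a y t \<le> \<epsilon>)"
    if t: "0 \<le> t" for t
  proof -
    have kt: "T (idx t) \<le> t" "t < T (Suc (idx t))" using idx[OF t] by auto
    note bt = segb[OF kt] and iv = inv[of "idx t"]
    show ?thesis unfolding DR DU DL using bt iv by linarith
  qed
  show ?thesis using R1 U1 L1 B unfolding y'_def by blast
qed



lemma unb_from_gaps:
  fixes T :: "nat \<Rightarrow> real"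
  assumes T0: "T 0 = 0" and Tinc: "\<forall>k. T k < T (Suc k)" and gaps: "\<forall>n. \<exists>k\<ge>n. 1 < T (Suc k) - T k"
  shows "\<forall>N. \<exists>k. N \<le> T k"
proof -
  have sm: "strict_mono T" using Tinc by (simp add: strict_mono_Suc_iff)
  have Tmono: "T j \<le> T k" if "j \<le> k" for j k using sm that by (simp add: strict_mono_less_eq)
  have nat: "\<exists>k. real m \<le> T k" for m :: nat
  proof (induction m)
    case 0
    then show ?case using T0 by (intro exI[of _ 0]) simp
  next
    case (Suc m)
    then obtain k where k: "real m \<le> T k" by blast
    obtain k' where k': "k \<le> k'" "1 < T (Suc k') - T k'" using gaps by blast
    have "T k \<le> T k'" using Tmono[OF k'(1)] .
    then have "real (Suc m) \<le> T (Suc k')" using k k' by simp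
    then show ?case by blast
  qed
  show ?thesis
  proof
    fix N :: real
    obtain m :: nat where "N \<le> real m" using real_arch_simple by blast
    with nat[of m] show "\<exists>k. N \<le> T k" by (meson order_trans)
  qed
qed

lemma poisson_AE:
  assumes P: "prob_space M" and poi: "poisson_arrivals M r T" and r: "0 < r"
  shows "AE \<omega> in M. T \<omega> 0 = 0 \<and> (\<forall>k. T \<omega> k < T \<omega> (Suc k)) \<and> (\<forall>n. \<exists>k\<ge>n. 1 < T \<omega> (Suc k) - T \<omega> k)"
proof -
  interpret prob_space M by (rule P)
  define G where "G k \<omega> = T \<omega> (Suc k) - T \<omega> k" for k \<omega>
  have D: "distributed M lborel (G k) (exponential_density r)" for k
    using poi unfolding poisson_arrivals_def G_def by blast
  have ind: "indep_vars (\<lambda>_. borel) G UNIV"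
    using poi unfolding poisson_arrivals_def G_def by blast
  have meas[measurable]: "G k \<in> borel_measurable M" for k
    using distributed_measurable[OF D[of k]] by simp
  have A0: "AE \<omega> in M. T \<omega> 0 = 0"
    using poi unfolding poisson_arrivals_def by (intro AE_I2) blast
  have A1: "AE \<omega> in M. 0 < G k \<omega>" for k
  proof -
    have "\<P>(\<omega> in M. G k \<omega> \<le> 0) = 1 - exp (- 0 * r)"
      by (rule exponential_distributedD_le[OF D]) (use r in auto)
    then have m0: "measure M {\<omega> \<in> space M. G k \<omega> \<le> 0} = 0" by simp
    have "{\<omega> \<in> space M. G k \<omega> \<le> 0} \<in> sets M" by measurable
    moreover have "{\<omega> \<in> space M. \<not> 0 < G k \<omega>} = {\<omega> \<in> space M. G k \<omega> \<le> 0}" by auto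
    ultimately show ?thesis
      using m0 by (subst AE_iff_measurable) (auto simp: emeasure_eq_measure)
  qed
  have A2: "AE \<omega> in M. \<exists>k\<ge>n. 1 < G k \<omega>" for n
  proof -
    define N where "N = {\<omega> \<in> space M. \<forall>k\<ge>n. G k \<omega> \<le> 1}"
    define q where "q = 1 - exp (- r)"
    have q: "0 \<le> q" "q < 1" using r by (auto simp: q_def)
    have Nm: "N \<in> sets M" unfolding N_def by measurable
    have p1: "prob (G k -` {..1} \<inter> space M) = q" for k
    proof -
      have "\<P>(\<omega> in M. G k \<omega> \<le> 1) = 1 - exp (- 1 * r)"
        by (rule exponential_distributedD_le[OF D]) (use r in auto)
      moreover have "{\<omega> \<in> space M. G k \<omega> \<le> 1} = G k -` {..1} \<inter> space M" by auto
      ultimately show ?thesis by (simp add: q_def)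
    qed
    have bnd: "measure M N \<le> q ^ Suc m" for m
    proof -
      define J where "J = {n..<n + Suc m}"
      have J: "J \<noteq> {}" "finite J" "J \<subseteq> UNIV" by (auto simp: J_def)
      have F: "prob (\<Inter>i\<in>J. G i -` {..1} \<inter> space M) = (\<Prod>i\<in>J. prob (G i -` {..1} \<inter> space M))"
        by (rule indep_varsD[OF ind J]) simp
      also have "\<dots> = q ^ Suc m" by (simp add: p1 J_def)
      finally have F': "prob (\<Inter>i\<in>J. G i -` {..1} \<inter> space M) = q ^ Suc m" .
      have "N \<subseteq> (\<Inter>i\<in>J. G i -` {..1} \<inter> space M)" unfolding N_def J_def by auto
      moreover have "(\<Inter>i\<in>J. G i -` {..1} \<inter> space M) \<in> sets M"
        using J by (intro sets.finite_INT) (auto intro: measurable_sets[OF meas])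
      ultimately have "measure M N \<le> prob (\<Inter>i\<in>J. G i -` {..1} \<inter> space M)"
        by (rule finite_measure_mono)
      then show ?thesis using F' by simp
    qed
    have "measure M N = 0"
    proof (rule ccontr)
      assume "measure M N \<noteq> 0"
      then have "0 < measure M N" using measure_nonneg[of M N] by linarith
      then obtain m where "q ^ m < measure M N" using real_arch_pow_inv q by blast
      moreover have "q ^ Suc m \<le> q ^ m" using q by (simp, intro mult_left_le_one_le) auto
      ultimately show False using bnd[of m] by linarith
    qed
    moreover have "{\<omega> \<in> space M. \<not> (\<exists>k\<ge>n. 1 < G k \<omega>)} = N" unfolding N_def by auto
    ultimately show ?thesis
      using Nm by (subst AE_iff_measurable) (auto simp: emeasure_eq_measure)
  qed
  have "AE \<omega> in M. \<forall>k. 0 < G k \<omega>" using A1 by (subst AE_all_countable) blast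
  moreover have "AE \<omega> in M. \<forall>n. \<exists>k\<ge>n. 1 < G k \<omega>" using A2 by (subst AE_all_countable) blast
  ultimately show ?thesis using A0 by eventually_elim (auto simp: G_def)
qed


theorem mainTheorem3:
  fixes M :: "'w measure" and X :: "'w \<Rightarrow> real \<Rightarrow> real" and T :: "'w \<Rightarrow> nat \<Rightarrow> real"
    and r a x \<epsilon> :: real
  assumes "prob_space M"
    and "levy_process M X"
    and "r > 0"
    and "poisson_arrivals M r T"
    and "prob_space.indep_set M
           (sets (vimage_algebra (space M) X (PiM (UNIV::real set) (\<lambda>_. borel))))
           (sets (vimage_algebra (space M) T (PiM (UNIV::nat set) (\<lambda>_. borel))))"
    and "a \<ge> 0" and "x \<ge> 0" and "\<epsilon> > 0"
  shows "AE \<omega> in M.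
     (\<forall>s t. 0 \<le> s \<longrightarrow> s \<le> t \<longrightarrow>
        pc_R (X \<omega>) (T \<omega>) a (x + \<epsilon>) t - pc_R (X \<omega>) (T \<omega>) a x t
          \<le> pc_R (X \<omega>) (T \<omega>) a (x + \<epsilon>) s - pc_R (X \<omega>) (T \<omega>) a x s) \<and>
     (\<forall>t\<ge>0. - \<epsilon> \<le> pc_R (X \<omega>) (T \<omega>) a (x + \<epsilon>) t - pc_R (X \<omega>) (T \<omega>) a x t \<and>
             pc_R (X \<omega>) (T \<omega>) a (x + \<epsilon>) t - pc_R (X \<omega>) (T \<omega>) a x t \<le> 0) \<and>
     (\<forall>s t. 0 \<le> s \<longrightarrow> s \<le> t \<longrightarrow>
        pc_U (X \<omega>) (T \<omega>) a (x + \<epsilon>) t - pc_U (X \<omega>) (T \<omega>) a x t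
          \<le> pc_U (X \<omega>) (T \<omega>) a (x + \<epsilon>) s - pc_U (X \<omega>) (T \<omega>) a x s) \<and>
     (\<forall>t\<ge>0. 0 \<le> pc_U (X \<omega>) (T \<omega>) a (x + \<epsilon>) t - pc_U (X \<omega>) (T \<omega>) a x t \<and>
             pc_U (X \<omega>) (T \<omega>) a (x + \<epsilon>) t - pc_U (X \<omega>) (T \<omega>) a x t \<le> \<epsilon>) \<and>
     (\<forall>s t. 0 \<le> s \<longrightarrow> s \<le> t \<longrightarrow>
        pc_L (X \<omega>) (T \<omega>) a (x + \<epsilon>) s - pc_L (X \<omega>) (T \<omega>) a x s
          \<le> pc_L (X \<omega>) (T \<omega>) a (x + \<epsilon>) t - pc_L (X \<omega>) (T \<omega>) a x t) \<and>
     (\<forall>t\<ge>0. 0 \<le> pc_L (X \<omega>) (T \<omega>) a (x + \<epsilon>) t - pc_L (X \<omega>) (T \<omega>) a x t \<and>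
             pc_L (X \<omega>) (T \<omega>) a (x + \<epsilon>) t - pc_L (X \<omega>) (T \<omega>) a x t \<le> \<epsilon>)"
proof -
  have L: "AE \<omega> in M. \<forall>t\<ge>0. continuous (at_right t) (X \<omega>) \<and> (0 < t \<longrightarrow> (\<exists>l. (X \<omega> \<longlongrightarrow> l) (at_left t)))"
    using assms(2) unfolding levy_process_def by blast
  have P: "AE \<omega> in M. T \<omega> 0 = 0 \<and> (\<forall>k. T \<omega> k < T \<omega> (Suc k)) \<and> (\<forall>n. \<exists>k\<ge>n. 1 < T \<omega> (Suc k) - T \<omega> k)"
    by (rule poisson_AE[OF assms(1) assms(4) assms(3)])
  from L P show ?thesis
  proof eventually_elim
    case (elim \<omega>)
    then have cad: "\<forall>t\<ge>0. continuous (at_right t) (X \<omega>) \<and> (0 < t \<longrightarrow> (\<exists>l. (X \<omega> \<longlongrightarrow> l) (at_left t)))"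
      and T0: "T \<omega> 0 = 0" and Tinc: "\<forall>k. T \<omega> k < T \<omega> (Suc k)"
      and gaps: "\<forall>n. \<exists>k\<ge>n. 1 < T \<omega> (Suc k) - T \<omega> k" by auto
    show ?case
      by (rule det_main[OF cad T0 Tinc unb_from_gaps[OF T0 Tinc gaps] assms(8)])
  qed
qed

end
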